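(* Let $(M,g)$ be an oriented Riemannian $8$-manifold with Hodge star $*$ and let $v,w$ be vector fields. The linear operator $B$ on $4$-forms given by $B\alpha = w\lrcorner *(v\lrcorner\alpha) - v\lrcorner *(w\lrcorner\alpha)$ is skew-symmetric with respect to the inner product induced by $g$, and its eigenvalues are $0$ and $\pm i|v\wedge w|$.
   Context: In the paper $g$ is the metric of a $\mathrm{Spin}(7)$-structure. $|v\wedge w|$ denotes the norm of the bivector $v\wedge w$, i.e. $|v\wedge w|^2 = |v|^2|w|^2 - g(v,w)^2$. *)

theory Defs
  imports Complex_Main
begin

text \<open>Pointwise linear algebra on an oriented Euclidean 8-space, identified with
R^8 with standard orthonormal basis e_0..e_7 and orientation e_0 ^ ... ^ e_7.
A k-form is given by its coefficients on the orthonormal basis e_I, I a k-subset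
of {0..7}, I = {i1 < ... < ik}, e_I = e_i1 ^ ... ^ e_ik.  Coefficients live in a
commutative ring 'a (real for the real forms, complex for the complexification).\<close>

definition idx_sets :: "nat \<Rightarrow> nat set set" where
  "idx_sets k = {I. I \<subseteq> {..<8} \<and> card I = k}"

definition is_form :: "nat \<Rightarrow> (nat set \<Rightarrow> 'a::zero) \<Rightarrow> bool" where
  "is_form k \<alpha> \<longleftrightarrow> (\<forall>I. \<alpha> I \<noteq> 0 \<longrightarrow> I \<in> idx_sets k)"

definition pos :: "nat set \<Rightarrow> nat \<Rightarrow> nat" where
  "pos I i = card {j\<in>I. j < i}"

text \<open>interior product: v \<lrcorner> e_I = sum over i in I of (-1)^(pos I i) v_i e_(I - {i})\<close>
definition interior :: "(nat \<Rightarrow> 'a::comm_ring_1) \<Rightarrow> (nat set \<Rightarrow> 'a) \<Rightarrow> (nat set \<Rightarrow> 'a)" where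
  "interior v \<alpha> J = (if J \<subseteq> {..<8}
      then (\<Sum>i\<in>{..<8} - J. (-1) ^ pos (insert i J) i * v i * \<alpha> (insert i J))
      else 0)"

text \<open>sign s(I) with e_I ^ e_(I^c) = s(I) vol\<close>
definition hsign :: "nat set \<Rightarrow> 'a::comm_ring_1" where
  "hsign I = (-1) ^ card {(i, j). i \<in> I \<and> j \<in> {..<8} - I \<and> j < i}"

text \<open>Hodge star: * e_I = s(I) e_(I^c)\<close>
definition hodge :: "(nat set \<Rightarrow> 'a::comm_ring_1) \<Rightarrow> (nat set \<Rightarrow> 'a)" where
  "hodge \<alpha> J = (if J \<subseteq> {..<8} then hsign ({..<8} - J) * \<alpha> ({..<8} - J) else 0)"

definition opB :: "(nat \<Rightarrow> 'a::comm_ring_1) \<Rightarrow> (nat \<Rightarrow> 'a) \<Rightarrow> (nat set \<Rightarrow> 'a) \<Rightarrow> (nat set \<Rightarrow> 'a)" where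
  "opB v w \<alpha> = (\<lambda>J. interior w (hodge (interior v \<alpha>)) J - interior v (hodge (interior w \<alpha>)) J)"

definition inner4 :: "(nat set \<Rightarrow> real) \<Rightarrow> (nat set \<Rightarrow> real) \<Rightarrow> real" where
  "inner4 \<alpha> \<beta> = (\<Sum>I\<in>idx_sets 4. \<alpha> I * \<beta> I)"

definition wedge_norm :: "(nat \<Rightarrow> real) \<Rightarrow> (nat \<Rightarrow> real) \<Rightarrow> real" where
  "wedge_norm v w = sqrt ((\<Sum>i<8. v i ^ 2) * (\<Sum>i<8. w i ^ 2) - (\<Sum>i<8. v i * w i) ^ 2)"

end

theory Submission
  imports Defs
begin


lemma pos_insert: "pos (insert a I) i = pos I i + (if a < i \<and> a \<notin> I then 1 else 0)"
proof -
  have fin: "finite {j\<in>I. j < i}" by (rule finite_subset[of _ "{..<i}"]) auto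
  show ?thesis
  proof (cases "a < i \<and> a \<notin> I")
    case True
    then have "{j\<in>insert a I. j < i} = insert a {j\<in>I. j < i}" by auto
    then show ?thesis using True fin by (simp add: pos_def)
  next
    case False
    then have "{j\<in>insert a I. j < i} = {j\<in>I. j < i}" by auto
    then show ?thesis using False by (simp add: pos_def)
  qed
qed

lemma pos_self_insert[simp]: "pos (insert a I) a = pos I a"
  by (simp add: pos_insert)

lemma pos_remove: "a \<in> I \<Longrightarrow> pos I i = pos (I - {a}) i + (if a < i then 1 else 0)"
  using pos_insert[of a "I - {a}" i] by (simp add: insert_absorb)



lemma sum_minus_if: "finite A \<Longrightarrow> (\<Sum>l\<in>A - {i}. f l) = (\<Sum>l\<in>A. if l \<noteq> i then f l else 0)"
proof -
  assume "finite A"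
  then have "(\<Sum>l\<in>A. if l \<noteq> i then f l else 0) = sum f {l\<in>A. l \<noteq> i}" by (simp add: sum.inter_filter)
  also have "{l\<in>A. l \<noteq> i} = A - {i}" by auto
  finally show ?thesis by simp
qed

lemma sum_swap_minus:
  assumes "finite A"
  shows "(\<Sum>i\<in>A. \<Sum>l\<in>A - {i}. f i l) = (\<Sum>l\<in>A. \<Sum>i\<in>A - {l}. f i l)"
proof -
  have "(\<Sum>i\<in>A. \<Sum>l\<in>A - {i}. f i l) = (\<Sum>i\<in>A. \<Sum>l\<in>A. if l \<noteq> i then f i l else 0)"
    using assms by (simp add: sum_minus_if)
  also have "\<dots> = (\<Sum>l\<in>A. \<Sum>i\<in>A. if l \<noteq> i then f i l else 0)" by (rule sum.swap)
  also have "\<dots> = (\<Sum>l\<in>A. \<Sum>i\<in>A - {l}. f i l)"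
    using assms by (simp add: sum_minus_if eq_commute[of l i for l i])
  finally show ?thesis .
qed

lemma sum_antisym:
  fixes f g :: "nat \<Rightarrow> nat \<Rightarrow> 'a::comm_ring_1"
  assumes "finite A" "\<And>i l. i \<in> A \<Longrightarrow> l \<in> A \<Longrightarrow> i \<noteq> l \<Longrightarrow> f i l = - g l i"
  shows "(\<Sum>i\<in>A. \<Sum>l\<in>A - {i}. f i l) = - (\<Sum>i\<in>A. \<Sum>l\<in>A - {i}. g i l)"
proof -
  have "(\<Sum>i\<in>A. \<Sum>l\<in>A - {i}. f i l) = (\<Sum>i\<in>A. \<Sum>l\<in>A - {i}. - g l i)"
    using assms(2) by (intro sum.cong refl) auto
  also have "\<dots> = - (\<Sum>i\<in>A. \<Sum>l\<in>A - {i}. g l i)" by (simp add: sum_negf)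
  also have "(\<Sum>i\<in>A. \<Sum>l\<in>A - {i}. g l i) = (\<Sum>i\<in>A. \<Sum>l\<in>A - {i}. g i l)"
    using sum_swap_minus[OF assms(1), of "\<lambda>i l. g l i"] by simp
  finally show ?thesis .
qed

lemma sign_swap:
  fixes a b i l :: nat
  assumes "i \<noteq> l"
  shows "((-1::'a::comm_ring_1) ^ (a + (if i < l then 1 else 0))) = - ((-1) ^ (a + (if l < i then 1 else 0)))"
proof (cases "i < l")
  case True then have "\<not> l < i" by simp
  with True show ?thesis by simp
next
  case False then have "l < i" using assms by simp
  with False show ?thesis by simp
qed

lemma interior_sub: "J \<subseteq> {..<8} \<Longrightarrow>
  interior v x J = (\<Sum>i\<in>{..<8}-J. (-1)^pos J i * v i * x (insert i J))"
  by (simp add: interior_def)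

lemma F_Diff_insert: "{..<8::nat} - insert a B = {..<8} - B - {a}" by auto

lemma int_int:
  fixes v w :: "nat \<Rightarrow> 'a::comm_ring_1"
  shows "interior v (interior w x) J = - interior w (interior v x) J"
proof (cases "J \<subseteq> {..<8}")
  case False then show ?thesis by (simp add: interior_def)
next
  case True
  let ?A = "{..<8} - J"
  have eq: "\<And>v w. interior v (interior w x) J =
     (\<Sum>i\<in>?A. \<Sum>l\<in>?A - {i}. (-1) ^ pos J i * v i * ((-1) ^ pos (insert i J) l * w l * x (insert l (insert i J))))"
  proof -
    fix v w :: "nat \<Rightarrow> 'a"
    have "interior v (interior w x) J = (\<Sum>i\<in>?A. (-1) ^ pos J i * v i * interior w x (insert i J))"
      using True by (rule interior_sub)
    also have "\<dots> = (\<Sum>i\<in>?A. (-1) ^ pos J i * v i * (\<Sum>l\<in>?A - {i}. (-1) ^ pos (insert i J) l * w l * x (insert l (insert i J))))"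
      apply (rule sum.cong[OF refl])
      apply (subst interior_sub)
      using True apply blast
      by (simp add: F_Diff_insert)
    finally show "interior v (interior w x) J = (\<Sum>i\<in>?A. \<Sum>l\<in>?A - {i}. (-1) ^ pos J i * v i * ((-1) ^ pos (insert i J) l * w l * x (insert l (insert i J))))"
      by (simp add: sum_distrib_left)
  qed
  show ?thesis unfolding eq
  proof (rule sum_antisym)
    fix i l assume "i \<in> ?A" "l \<in> ?A" "i \<noteq> l"
    then show "(-1) ^ pos J i * v i * ((-1) ^ pos (insert i J) l * w l * x (insert l (insert i J))) =
      - ((-1) ^ pos J l * w l * ((-1) ^ pos (insert l J) i * v i * x (insert i (insert l J))))"
      using sign_swap[of i l "pos J l", where 'a='a] 
      by (simp add: pos_insert insert_commute power_add)
  qed simp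
qed



definition eps :: "(nat \<Rightarrow> 'a::comm_ring_1) \<Rightarrow> (nat set \<Rightarrow> 'a) \<Rightarrow> (nat set \<Rightarrow> 'a)" where
  "eps v x J = (if J \<subseteq> {..<8} then (\<Sum>i\<in>J. (-1) ^ pos J i * v i * x (J - {i})) else 0)"

definition supp8 :: "(nat set \<Rightarrow> 'a::zero) \<Rightarrow> bool" where
  "supp8 x \<longleftrightarrow> (\<forall>J. x J \<noteq> 0 \<longrightarrow> J \<subseteq> {..<8})"

lemma eps_sub: "J \<subseteq> {..<8} \<Longrightarrow> eps v x J = (\<Sum>i\<in>J. (-1) ^ pos J i * v i * x (J - {i}))"
  by (simp add: eps_def)

lemma finite_sub8: "J \<subseteq> {..<8::nat} \<Longrightarrow> finite J"
  using finite_subset by blast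

lemma pos_remove_self: "pos (J - {l}) l = pos J l"
  using pos_insert[of l "J - {l}" l] by (cases "l \<in> J") (simp_all add: insert_absorb)

lemma eps_eps:
  fixes v w :: "nat \<Rightarrow> 'a::comm_ring_1"
  shows "eps v (eps w x) J = - eps w (eps v x) J"
proof (cases "J \<subseteq> {..<8}")
  case False then show ?thesis by (simp add: eps_def)
next
  case True
  have fin: "finite J" using True by (rule finite_sub8)
  have eq: "\<And>v w. eps v (eps w x) J =
     (\<Sum>i\<in>J. \<Sum>l\<in>J - {i}. (-1) ^ pos J i * v i * ((-1) ^ pos (J - {i}) l * w l * x (J - {i} - {l})))"
  proof -
    fix v w :: "nat \<Rightarrow> 'a"
    have "eps v (eps w x) J = (\<Sum>i\<in>J. (-1) ^ pos J i * v i * eps w x (J - {i}))"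
      using True by (rule eps_sub)
    also have "\<dots> = (\<Sum>i\<in>J. (-1) ^ pos J i * v i * (\<Sum>l\<in>J - {i}. (-1) ^ pos (J - {i}) l * w l * x (J - {i} - {l})))"
      apply (rule sum.cong[OF refl])
      apply (subst eps_sub)
      using True apply blast
      by simp
    finally show "eps v (eps w x) J = (\<Sum>i\<in>J. \<Sum>l\<in>J - {i}. (-1) ^ pos J i * v i * ((-1) ^ pos (J - {i}) l * w l * x (J - {i} - {l})))"
      by (simp add: sum_distrib_left)
  qed
  show ?thesis unfolding eq
  proof (rule sum_antisym[OF fin])
    fix i l assume il: "i \<in> J" "l \<in> J" "i \<noteq> l"
    have p1: "pos J l = pos (J - {i}) l + (if i < l then 1 else 0)" using il(1) by (rule pos_remove)
    have p2: "pos J i = pos (J - {l}) i + (if l < i then 1 else 0)" using il(2) by (rule pos_remove)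
    have xs: "J - {l} - {i} = J - {i} - {l}" by auto
    show "(-1) ^ pos J i * v i * ((-1) ^ pos (J - {i}) l * w l * x (J - {i} - {l})) =
      - ((-1) ^ pos J l * w l * ((-1) ^ pos (J - {l}) i * v i * x (J - {l} - {i})))"
      unfolding p1 p2 xs
      using sign_swap[of i l "pos (J - {l}) i + pos (J - {i}) l", where 'a='a] il
      by (simp add: power_add algebra_simps)
  qed
qed



lemma sq_sign: "((-1::'a::comm_ring_1) ^ n) * (-1) ^ n = 1"
  by (simp add: power_mult_distrib[symmetric])

lemma int_eps:
  fixes v w :: "nat \<Rightarrow> 'a::comm_ring_1"
  assumes sx: "supp8 x"
  shows "interior v (eps w x) J = (\<Sum>i<8. v i * w i) * x J - eps w (interior v x) J"
proof (cases "J \<subseteq> {..<8}")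
  case False
  then have "x J = 0" using sx unfolding supp8_def by blast
  then show ?thesis using False by (simp add: interior_def eps_def)
next
  case True
  let ?A = "{..<8} - J"
  have fin: "finite J" using True by (rule finite_sub8)
  define X where "X i l = x (insert i (J - {l}))" for i l
  have L: "interior v (eps w x) J = (\<Sum>i\<in>?A. v i * w i * x J) +
      (\<Sum>i\<in>?A. \<Sum>l\<in>J. (-1) ^ pos J i * (-1) ^ pos (insert i J) l * v i * w l * X i l)"
  proof -
    have "interior v (eps w x) J = (\<Sum>i\<in>?A. (-1) ^ pos J i * v i * eps w x (insert i J))"
      using True by (rule interior_sub)
    also have "\<dots> = (\<Sum>i\<in>?A. v i * w i * x J +
         (\<Sum>l\<in>J. (-1) ^ pos J i * (-1) ^ pos (insert i J) l * v i * w l * X i l))"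
    proof (rule sum.cong[OF refl])
      fix i assume i: "i \<in> ?A"
      have sqs: "(-1) ^ pos J i * (v i * ((-1) ^ pos J i * (w i * x J))) = v i * (w i * x J)"
      proof -
        have "(-1) ^ pos J i * (v i * ((-1) ^ pos J i * (w i * x J))) = ((-1) ^ pos J i * (-1) ^ pos J i) * (v i * (w i * x J))"
          by (simp only: mult_ac)
        then show ?thesis by (simp add: sq_sign)
      qed
      have sub: "insert i J \<subseteq> {..<8}" using i True by blast
      have "eps w x (insert i J) = (\<Sum>l\<in>insert i J. (-1) ^ pos (insert i J) l * w l * x (insert i J - {l}))"
        using sub by (rule eps_sub)
      also have "\<dots> = (-1) ^ pos J i * w i * x J + (\<Sum>l\<in>J. (-1) ^ pos (insert i J) l * w l * X i l)"
      proof -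
        have "\<And>l. l \<in> J \<Longrightarrow> insert i J - {l} = insert i (J - {l})" using i by auto
        moreover have "insert i J - {i} = J" using i by auto
        ultimately show ?thesis using i fin by (simp add: sum.insert X_def)
      qed
      finally show "(-1) ^ pos J i * v i * eps w x (insert i J) = v i * w i * x J +
         (\<Sum>l\<in>J. (-1) ^ pos J i * (-1) ^ pos (insert i J) l * v i * w l * X i l)"
        by (simp add: distrib_left sum_distrib_left mult_ac sqs)
    qed
    also have "\<dots> = (\<Sum>i\<in>?A. v i * w i * x J) +
      (\<Sum>i\<in>?A. \<Sum>l\<in>J. (-1) ^ pos J i * (-1) ^ pos (insert i J) l * v i * w l * X i l)"
      by (simp add: sum.distrib)
    finally show ?thesis .
  qed
  have R: "eps w (interior v x) J = (\<Sum>l\<in>J. v l * w l * x J) +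
      (\<Sum>l\<in>J. \<Sum>i\<in>?A. (-1) ^ pos J l * (-1) ^ pos (J - {l}) i * v i * w l * X i l)"
  proof -
    have "eps w (interior v x) J = (\<Sum>l\<in>J. (-1) ^ pos J l * w l * interior v x (J - {l}))"
      using True by (rule eps_sub)
    also have "\<dots> = (\<Sum>l\<in>J. v l * w l * x J +
         (\<Sum>i\<in>?A. (-1) ^ pos J l * (-1) ^ pos (J - {l}) i * v i * w l * X i l))"
    proof (rule sum.cong[OF refl])
      fix l assume l: "l \<in> J"
      have sqs: "(-1) ^ pos J l * (w l * ((-1) ^ pos J l * (v l * x J))) = v l * (w l * x J)"
      proof -
        have "(-1) ^ pos J l * (w l * ((-1) ^ pos J l * (v l * x J))) = ((-1) ^ pos J l * (-1) ^ pos J l) * (v l * (w l * x J))"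
          by (simp only: mult_ac)
        then show ?thesis by (simp add: sq_sign)
      qed
      have sub: "J - {l} \<subseteq> {..<8}" using l True by blast
      have "interior v x (J - {l}) = (\<Sum>i\<in>{..<8} - (J - {l}). (-1) ^ pos (J - {l}) i * v i * x (insert i (J - {l})))"
        using sub by (rule interior_sub)
      also have "{..<8} - (J - {l}) = insert l ?A" using l True by auto
      also have "(\<Sum>i\<in>insert l ?A. (-1) ^ pos (J - {l}) i * v i * x (insert i (J - {l}))) =
          (-1) ^ pos J l * v l * x J + (\<Sum>i\<in>?A. (-1) ^ pos (J - {l}) i * v i * X i l)"
      proof -
        have "insert l (J - {l}) = J" using l by auto
        then show ?thesis using l by (simp add: sum.insert X_def pos_remove_self)
      qed
      finally show "(-1) ^ pos J l * w l * interior v x (J - {l}) = v l * w l * x J +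
         (\<Sum>i\<in>?A. (-1) ^ pos J l * (-1) ^ pos (J - {l}) i * v i * w l * X i l)"
        by (simp add: distrib_left sum_distrib_left mult_ac sqs)
    qed
    also have "\<dots> = (\<Sum>l\<in>J. v l * w l * x J) +
      (\<Sum>l\<in>J. \<Sum>i\<in>?A. (-1) ^ pos J l * (-1) ^ pos (J - {l}) i * v i * w l * X i l)"
      by (simp add: sum.distrib)
    finally show ?thesis .
  qed
  have cross: "(\<Sum>i\<in>?A. \<Sum>l\<in>J. (-1) ^ pos J i * (-1) ^ pos (insert i J) l * v i * w l * X i l) =
     - (\<Sum>l\<in>J. \<Sum>i\<in>?A. (-1) ^ pos J l * (-1) ^ pos (J - {l}) i * v i * w l * X i l)"
  proof -
    have "(\<Sum>i\<in>?A. \<Sum>l\<in>J. (-1) ^ pos J i * (-1) ^ pos (insert i J) l * v i * w l * X i l) =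
      (\<Sum>l\<in>J. \<Sum>i\<in>?A. (-1) ^ pos J i * (-1) ^ pos (insert i J) l * v i * w l * X i l)"
      by (rule sum.swap)
    also have "\<dots> = (\<Sum>l\<in>J. \<Sum>i\<in>?A. - ((-1) ^ pos J l * (-1) ^ pos (J - {l}) i * v i * w l * X i l))"
    proof (intro sum.cong refl)
      fix l i assume l: "l \<in> J" and i: "i \<in> ?A"
      then have il: "i \<noteq> l" by auto
      have p1: "pos (insert i J) l = pos J l + (if i < l then 1 else 0)" using i by (simp add: pos_insert)
      have p2: "pos J i = pos (J - {l}) i + (if l < i then 1 else 0)" using l by (rule pos_remove)
      show "(-1) ^ pos J i * (-1) ^ pos (insert i J) l * v i * w l * X i l =
         - ((-1) ^ pos J l * (-1) ^ pos (J - {l}) i * v i * w l * X i l)"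
        unfolding p1 p2
        using sign_swap[of i l "pos (J - {l}) i + pos J l", where 'a='a] il
        by (simp add: power_add algebra_simps)
    qed
    also have "\<dots> = - (\<Sum>l\<in>J. \<Sum>i\<in>?A. (-1) ^ pos J l * (-1) ^ pos (J - {l}) i * v i * w l * X i l)"
      by (simp add: sum_negf)
    finally show ?thesis .
  qed
  have r: "(\<Sum>i<8. v i * w i) = (\<Sum>i\<in>?A. v i * w i) + (\<Sum>i\<in>J. v i * w i)"
  proof -
    have "{..<8::nat} = ?A \<union> J" using True by auto
    then have "(\<Sum>i<8. v i * w i) = (\<Sum>i\<in>?A \<union> J. v i * w i)" by simp
    also have "\<dots> = (\<Sum>i\<in>?A. v i * w i) + (\<Sum>i\<in>J. v i * w i)"
      by (rule sum.union_disjoint) (use fin in auto)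
    finally show ?thesis .
  qed
  have e1: "(\<Sum>i\<in>?A. v i * w i * x J) = (\<Sum>i\<in>?A. v i * w i) * x J" by (rule sum_distrib_right[symmetric])
  have e2: "(\<Sum>i\<in>J. v i * w i * x J) = (\<Sum>i\<in>J. v i * w i) * x J" by (rule sum_distrib_right[symmetric])
  show ?thesis unfolding L R cross r e1 e2
    by (simp add: algebra_simps)
qed



definition hexp :: "nat set \<Rightarrow> nat" where
  "hexp K = card {(i, j). i \<in> K \<and> j \<in> {..<8} - K \<and> j < i}"

lemma hsign_hexp: "hsign K = (-1) ^ hexp K"
  by (simp add: hsign_def hexp_def)

lemma hexp_sum: "finite K \<Longrightarrow> hexp K = (\<Sum>a\<in>K. pos ({..<8} - K) a)"
proof -
  assume fin: "finite K"
  have "{(i, j). i \<in> K \<and> j \<in> {..<8} - K \<and> j < i} = Sigma K (\<lambda>a. {j\<in>{..<8} - K. j < a})" by auto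
  then have "hexp K = card (Sigma K (\<lambda>a. {j\<in>{..<8} - K. j < a}))" by (simp add: hexp_def)
  also have "\<dots> = (\<Sum>a\<in>K. card {j\<in>{..<8} - K. j < a})" using fin by (intro card_SigmaI) auto
  finally show ?thesis by (simp add: pos_def)
qed

lemma pos_card_sum: "finite B \<Longrightarrow> pos B a = (\<Sum>b\<in>B. if b < a then 1 else 0)"
  by (simp add: pos_def sum.inter_filter[symmetric])

lemma hexp_compl:
  assumes "J \<subseteq> {..<8}"
  shows "hexp J + hexp ({..<8} - J) = card J * card ({..<8} - J)"
proof -
  let ?C = "{..<8::nat} - J"
  have fJ: "finite J" using assms by (rule finite_sub8)
  have fC: "finite ?C" by simp
  have CC: "{..<8} - ?C = J" using assms by auto
  have "hexp J + hexp ?C = (\<Sum>a\<in>J. pos ?C a) + (\<Sum>b\<in>?C. pos J b)"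
    using fJ fC CC by (simp add: hexp_sum)
  also have "\<dots> = (\<Sum>a\<in>J. \<Sum>b\<in>?C. if b < a then 1 else 0) + (\<Sum>b\<in>?C. \<Sum>a\<in>J. if a < b then 1 else 0)"
    using fJ fC by (simp add: pos_card_sum)
  also have "(\<Sum>b\<in>?C. \<Sum>a\<in>J. if a < b then 1 else 0) = (\<Sum>a\<in>J. \<Sum>b\<in>?C. if a < b then (1::nat) else 0)"
    by (rule sum.swap)
  also have "(\<Sum>a\<in>J. \<Sum>b\<in>?C. if b < a then 1 else 0) + (\<Sum>a\<in>J. \<Sum>b\<in>?C. if a < b then 1 else 0) =
      (\<Sum>a\<in>J. \<Sum>b\<in>?C. (1::nat))"
    unfolding sum.distrib[symmetric]
  proof (intro sum.cong refl)
    fix a b assume "a \<in> J" "b \<in> ?C"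
    then have "a \<noteq> b" by auto
    then show "(if b < a then 1 else 0) + (if a < b then 1 else 0) = (1::nat)" by auto
  qed
  also have "\<dots> = card J * card ?C" by simp
  finally show ?thesis .
qed

lemma pos_plus_above:
  assumes "finite K" "i \<in> K"
  shows "pos K i + card {a\<in>K. i < a} = card K - 1"
proof -
  have "{a\<in>K. a < i} \<union> {a\<in>K. i < a} = K - {i}" by auto
  moreover have "card ({a\<in>K. a < i} \<union> {a\<in>K. i < a}) = card {a\<in>K. a < i} + card {a\<in>K. i < a}"
    using assms(1) by (intro card_Un_disjoint) auto
  ultimately show ?thesis using assms by (simp add: pos_def)
qed

lemma hexp_remove:
  assumes K: "K \<subseteq> {..<8}" and i: "i \<in> K"
  shows "hexp (K - {i}) + pos ({..<8} - K) i = hexp K + card {a\<in>K. i < a}"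
proof -
  let ?J = "{..<8::nat} - K"
  have fK: "finite K" using K by (rule finite_sub8)
  have c: "{..<8} - (K - {i}) = insert i ?J" using K i by auto
  have "hexp (K - {i}) = (\<Sum>a\<in>K - {i}. pos (insert i ?J) a)"
    using fK by (simp add: hexp_sum c)
  also have "\<dots> = (\<Sum>a\<in>K - {i}. pos ?J a + (if i < a then 1 else 0))"
    using i by (intro sum.cong refl) (simp add: pos_insert)
  also have "\<dots> = (\<Sum>a\<in>K - {i}. pos ?J a) + card {a\<in>K. i < a}"
  proof -
    have "(\<Sum>a\<in>K - {i}. (if i < a then 1 else 0)) = card {a\<in>K - {i}. i < a}"
      using fK by (simp add: sum.inter_filter[symmetric])
    also have "{a\<in>K - {i}. i < a} = {a\<in>K. i < a}" by auto
    finally show ?thesis by (simp add: sum.distrib)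
  qed
  finally have e1: "hexp (K - {i}) = (\<Sum>a\<in>K - {i}. pos ?J a) + card {a\<in>K. i < a}" .
  have e2: "hexp K = pos ?J i + (\<Sum>a\<in>K - {i}. pos ?J a)"
    using fK i by (simp add: hexp_sum sum.remove)
  show ?thesis using e1 e2 by simp
qed



lemma F_Diff_Diff: "J \<subseteq> {..<8::nat} \<Longrightarrow> {..<8} - ({..<8} - J) = J" by auto

lemma hodge_sub: "J \<subseteq> {..<8} \<Longrightarrow> hodge x J = hsign ({..<8} - J) * x ({..<8} - J)"
  by (simp add: hodge_def)

lemma sign_k': "(k::nat) \<le> 8 \<Longrightarrow> even (k * (8 - k) + k)"
proof -
  assume "k \<le> 8"
  then have "9 - k = Suc (8 - k)" by simp
  then have "k * (8 - k) + k = k * (9 - k)" by simp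
  moreover have "even (k * (9 - k))"
  proof (cases "even k")
    case True then show ?thesis by simp
  next
    case False
    then have "even (9 - k)" using \<open>k \<le> 8\<close> by (simp add: even_diff_nat)
    then show ?thesis by simp
  qed
  ultimately show ?thesis by simp
qed


lemma sign_k: "k \<le> 8 \<Longrightarrow> (-1::'a::comm_ring_1) ^ (k * (8 - k)) = (-1) ^ k"
proof -
  assume k: "k \<le> 8"
  have "even (k * (8 - k)) = even k" using sign_k'[OF k] by auto
  then show ?thesis by (simp add: minus_one_power_iff)
qed

lemma card_F_Diff: "J \<subseteq> {..<8::nat} \<Longrightarrow> card ({..<8} - J) = 8 - card J"
  by (simp add: card_Diff_subset finite_sub8)

lemma card_sub8: "J \<subseteq> {..<8::nat} \<Longrightarrow> card J \<le> 8"
  using card_mono[of "{..<8::nat}" J] by simp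

lemma hodge_hodge:
  fixes \<alpha> :: "nat set \<Rightarrow> 'a::comm_ring_1"
  assumes f: "is_form k \<alpha>"
  shows "hodge (hodge \<alpha>) J = (-1) ^ k * \<alpha> J"
proof (cases "J \<subseteq> {..<8}")
  case False
  then have "\<alpha> J = 0" using f by (auto simp: is_form_def idx_sets_def)
  then show ?thesis using False by (simp add: hodge_def)
next
  case True
  have e: "hodge (hodge \<alpha>) J = hsign ({..<8} - J) * hsign J * \<alpha> J"
    using True by (simp add: hodge_sub F_Diff_Diff)
  show ?thesis
  proof (cases "\<alpha> J = 0")
    case True then show ?thesis using e by simp
  next
    case False
    then have k: "card J = k" using f by (auto simp: is_form_def idx_sets_def)
    have "hexp J + hexp ({..<8} - J) = k * (8 - k)" using hexp_compl[OF True] k card_F_Diff[OF True] by simp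
    then have "hsign ({..<8} - J) * hsign J = ((-1::'a) ^ (k * (8 - k)))"
      by (simp add: hsign_hexp power_add[symmetric] add.commute)
    also have "\<dots> = (-1) ^ k" using sign_k card_sub8[OF True] k by simp
    finally show ?thesis using e by simp
  qed
qed

lemma hodge_eps:
  fixes \<alpha> :: "nat set \<Rightarrow> 'a::comm_ring_1"
  assumes f: "is_form k \<alpha>"
  shows "hodge (eps w \<alpha>) J = (-1) ^ k * interior w (hodge \<alpha>) J"
proof (cases "J \<subseteq> {..<8}")
  case False then show ?thesis by (simp add: hodge_def interior_def)
next
  case True
  let ?K = "{..<8::nat} - J"
  have K: "?K \<subseteq> {..<8}" by auto
  have fK: "finite ?K" by simp
  have FK: "{..<8} - ?K = J" using True by auto
  have L: "hodge (eps w \<alpha>) J = (\<Sum>i\<in>?K. hsign ?K * ((-1) ^ pos ?K i * w i * \<alpha> (?K - {i})))"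
    using True K by (simp add: hodge_sub eps_sub sum_distrib_left)
  have R: "interior w (hodge \<alpha>) J = (\<Sum>i\<in>?K. (-1) ^ pos J i * w i * (hsign (?K - {i}) * \<alpha> (?K - {i})))"
  proof -
    have "interior w (hodge \<alpha>) J = (\<Sum>i\<in>?K. (-1) ^ pos J i * w i * hodge \<alpha> (insert i J))"
      using True by (rule interior_sub)
    also have "\<dots> = (\<Sum>i\<in>?K. (-1) ^ pos J i * w i * (hsign (?K - {i}) * \<alpha> (?K - {i})))"
    proof (intro sum.cong refl)
      fix i assume i: "i \<in> ?K"
      then have "insert i J \<subseteq> {..<8}" using True by auto
      moreover have "{..<8} - insert i J = ?K - {i}" by auto
      ultimately show "(-1) ^ pos J i * w i * hodge \<alpha> (insert i J) = (-1) ^ pos J i * w i * (hsign (?K - {i}) * \<alpha> (?K - {i}))"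
        by (simp add: hodge_sub)
    qed
    finally show ?thesis .
  qed
  show ?thesis unfolding L R sum_distrib_left
  proof (intro sum.cong refl)
    fix i assume i: "i \<in> ?K"
    show "hsign ?K * ((-1) ^ pos ?K i * w i * \<alpha> (?K - {i})) =
        (-1) ^ k * ((-1) ^ pos J i * w i * (hsign (?K - {i}) * \<alpha> (?K - {i})))"
    proof (cases "\<alpha> (?K - {i}) = 0")
      case True then show ?thesis by simp
    next
      case False
      then have "card (?K - {i}) = k" using f by (auto simp: is_form_def idx_sets_def)
      then have ck: "card ?K - 1 = k" using i by simp
      define m where "m = card {a\<in>?K. i < a}"
      have h1: "pos ?K i + m = k" using pos_plus_above[OF fK i] ck by (simp add: m_def)
      have h2: "hexp (?K - {i}) + pos J i = hexp ?K + m" using hexp_remove[OF K i] FK by (simp add: m_def)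
      have ex: "k + pos J i + hexp (?K - {i}) = (hexp ?K + pos ?K i) + 2 * m" using h1 h2 by simp
      have "(-1::'a) ^ k * ((-1) ^ pos J i * hsign (?K - {i})) = (-1) ^ (k + pos J i + hexp (?K - {i}))"
        by (simp add: hsign_hexp power_add)
      also have "\<dots> = (-1) ^ (hexp ?K + pos ?K i)" unfolding ex by (simp add: power_add power_mult)
      also have "\<dots> = hsign ?K * (-1) ^ pos ?K i" by (simp add: hsign_hexp power_add)
      finally have s: "(-1::'a) ^ k * ((-1) ^ pos J i * hsign (?K - {i})) = hsign ?K * (-1) ^ pos ?K i" .
      have "(-1) ^ k * ((-1) ^ pos J i * w i * (hsign (?K - {i}) * \<alpha> (?K - {i}))) =
          ((-1::'a) ^ k * ((-1) ^ pos J i * hsign (?K - {i}))) * (w i * \<alpha> (?K - {i}))"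
        by (simp only: mult_ac)
      also have "\<dots> = hsign ?K * ((-1) ^ pos ?K i * w i * \<alpha> (?K - {i}))" unfolding s by (simp only: mult_ac)
      finally show ?thesis by simp
    qed
  qed
qed

lemma form_supp: "is_form k \<alpha> \<Longrightarrow> supp8 \<alpha>"
  by (auto simp: is_form_def supp8_def idx_sets_def)

lemma supp_interior[simp]: "supp8 (interior v x)"
  by (auto simp: supp8_def interior_def split: if_splits)
lemma supp_eps[simp]: "supp8 (eps v x)"
  by (auto simp: supp8_def eps_def split: if_splits)
lemma supp_hodge[simp]: "supp8 (hodge x)"
  by (auto simp: supp8_def hodge_def split: if_splits)



lemma interior_form: "is_form k \<alpha> \<Longrightarrow> is_form (k - 1) (interior v \<alpha>)"
  unfolding is_form_def
proof (intro allI impI)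
  fix J assume f: "\<forall>I. \<alpha> I \<noteq> 0 \<longrightarrow> I \<in> idx_sets k" and nz: "interior v \<alpha> J \<noteq> 0"
  then have J: "J \<subseteq> {..<8}" by (auto simp: interior_def split: if_splits)
  with nz have "(\<Sum>i\<in>{..<8}-J. (-1)^pos J i * v i * \<alpha> (insert i J)) \<noteq> 0" by (simp add: interior_sub)
  then obtain i where i: "i \<in> {..<8} - J" "(-1)^pos J i * v i * \<alpha> (insert i J) \<noteq> 0"
    by (rule sum.not_neutral_contains_not_neutral)
  then have "\<alpha> (insert i J) \<noteq> 0" by auto
  then have "card (insert i J) = k" using f by (simp add: idx_sets_def)
  then have "card J = k - 1" using i finite_sub8[OF J] by simp
  then show "J \<in> idx_sets (k - 1)" using J by (simp add: idx_sets_def)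
qed

lemma eps_form: "is_form k \<alpha> \<Longrightarrow> is_form (k + 1) (eps v \<alpha>)"
  unfolding is_form_def
proof (intro allI impI)
  fix J assume f: "\<forall>I. \<alpha> I \<noteq> 0 \<longrightarrow> I \<in> idx_sets k" and nz: "eps v \<alpha> J \<noteq> 0"
  then have J: "J \<subseteq> {..<8}" by (auto simp: eps_def split: if_splits)
  with nz have "(\<Sum>i\<in>J. (-1) ^ pos J i * v i * \<alpha> (J - {i})) \<noteq> 0" by (simp add: eps_sub)
  then obtain i where i: "i \<in> J" "(-1) ^ pos J i * v i * \<alpha> (J - {i}) \<noteq> 0"
    by (rule sum.not_neutral_contains_not_neutral)
  then have "\<alpha> (J - {i}) \<noteq> 0" by auto
  then have "card (J - {i}) = k" using f by (simp add: idx_sets_def)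
  moreover have "card (J - {i}) = card J - 1" using i by simp
  moreover have "card J \<noteq> 0" using i finite_sub8[OF J] by auto
  ultimately have "card J = k + 1" by simp
  then show "J \<in> idx_sets (k + 1)" using J by (simp add: idx_sets_def)
qed

lemma hodge_form: "is_form k \<alpha> \<Longrightarrow> is_form (8 - k) (hodge \<alpha>)"
  unfolding is_form_def
proof (intro allI impI)
  fix J assume f: "\<forall>I. \<alpha> I \<noteq> 0 \<longrightarrow> I \<in> idx_sets k" and nz: "hodge \<alpha> J \<noteq> 0"
  then have J: "J \<subseteq> {..<8}" by (auto simp: hodge_def split: if_splits)
  with nz have "\<alpha> ({..<8} - J) \<noteq> 0" by (auto simp: hodge_sub)
  then have "card ({..<8} - J) = k" using f by (simp add: idx_sets_def)
  then have "card J = 8 - k" using card_F_Diff[OF J] card_sub8[OF J] by simp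
  then show "J \<in> idx_sets (8 - k)" using J by (simp add: idx_sets_def)
qed




lemma interior_diff[simp]: "interior a (\<lambda>J. f J - g J) = (\<lambda>J. interior a f J - interior a g J)"
  by (simp add: fun_eq_iff interior_def sum_subtractf algebra_simps)
lemma interior_add[simp]: "interior a (\<lambda>J. f J + g J) = (\<lambda>J. interior a f J + interior a g J)"
  by (simp add: fun_eq_iff interior_def sum.distrib algebra_simps)
lemma interior_smult[simp]: "interior a (\<lambda>J. c * f J) = (\<lambda>J. c * interior a f J)"
  by (simp add: fun_eq_iff interior_def sum_distrib_left algebra_simps)
lemma interior_neg[simp]: "interior a (\<lambda>J. - f J) = (\<lambda>J. - interior a f J)"
  by (simp add: fun_eq_iff interior_def sum_negf)
lemma interior_zero[simp]: "interior a (\<lambda>J. 0) = (\<lambda>J. 0)"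
  by (simp add: fun_eq_iff interior_def)

lemma eps_diff[simp]: "eps a (\<lambda>J. f J - g J) = (\<lambda>J. eps a f J - eps a g J)"
  by (simp add: fun_eq_iff eps_def sum_subtractf algebra_simps)
lemma eps_add[simp]: "eps a (\<lambda>J. f J + g J) = (\<lambda>J. eps a f J + eps a g J)"
  by (simp add: fun_eq_iff eps_def sum.distrib algebra_simps)
lemma eps_smult[simp]: "eps a (\<lambda>J. c * f J) = (\<lambda>J. c * eps a f J)"
  by (simp add: fun_eq_iff eps_def sum_distrib_left algebra_simps)
lemma eps_neg[simp]: "eps a (\<lambda>J. - f J) = (\<lambda>J. - eps a f J)"
  by (simp add: fun_eq_iff eps_def sum_negf)
lemma eps_zero[simp]: "eps a (\<lambda>J. 0) = (\<lambda>J. 0)"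
  by (simp add: fun_eq_iff eps_def)

lemma hodge_diff[simp]: "hodge (\<lambda>J. f J - g J) = (\<lambda>J. hodge f J - hodge g J)"
  by (simp add: fun_eq_iff hodge_def algebra_simps)
lemma hodge_add[simp]: "hodge (\<lambda>J. f J + g J) = (\<lambda>J. hodge f J + hodge g J)"
  by (simp add: fun_eq_iff hodge_def algebra_simps)
lemma hodge_smult[simp]: "hodge (\<lambda>J. c * f J) = (\<lambda>J. c * hodge f J)"
  by (simp add: fun_eq_iff hodge_def algebra_simps)
lemma hodge_neg[simp]: "hodge (\<lambda>J. - f J) = (\<lambda>J. - hodge f J)"
  by (simp add: fun_eq_iff hodge_def)

lemma supp_I: "(\<And>J. f J \<noteq> 0 \<Longrightarrow> J \<subseteq> {..<8}) \<Longrightarrow> supp8 f"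
  by (auto simp: supp8_def)
lemma supp_D: "supp8 f \<Longrightarrow> \<not> J \<subseteq> {..<8} \<Longrightarrow> f J = 0"
  by (auto simp: supp8_def)

lemma supp_I2: "(\<And>J. \<not> J \<subseteq> {..<8} \<Longrightarrow> f J = 0) \<Longrightarrow> supp8 f"
  by (auto simp: supp8_def)

lemma supp_diff[simp]: "supp8 (f::nat set \<Rightarrow> 'a::ab_group_add) \<Longrightarrow> supp8 g \<Longrightarrow> supp8 (\<lambda>J. f J - g J)"
proof (rule supp_I2)
  fix J :: "nat set" assume "supp8 f" "supp8 g" "\<not> J \<subseteq> {..<8}"
  then have "f J = 0" "g J = 0" by (auto intro: supp_D)
  then show "f J - g J = 0" by simp
qed
lemma supp_add[simp]: "supp8 (f::nat set \<Rightarrow> 'a::monoid_add) \<Longrightarrow> supp8 g \<Longrightarrow> supp8 (\<lambda>J. f J + g J)"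
proof (rule supp_I2)
  fix J :: "nat set" assume "supp8 f" "supp8 g" "\<not> J \<subseteq> {..<8}"
  then have "f J = 0" "g J = 0" by (auto intro: supp_D)
  then show "f J + g J = 0" by simp
qed
lemma supp_smult[simp]: "supp8 (f::nat set \<Rightarrow> 'a::mult_zero) \<Longrightarrow> supp8 (\<lambda>J. c * f J)"
proof (rule supp_I2)
  fix J :: "nat set" assume "supp8 f" "\<not> J \<subseteq> {..<8}"
  then have "f J = 0" by (auto intro: supp_D)
  then show "c * f J = 0" by simp
qed
lemma supp_neg[simp]: "supp8 (f::nat set \<Rightarrow> 'a::group_add) \<Longrightarrow> supp8 (\<lambda>J. - f J)"
proof (rule supp_I2)
  fix J :: "nat set" assume "supp8 f" "\<not> J \<subseteq> {..<8}"
  then have "f J = 0" by (auto intro: supp_D)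
  then show "- f J = 0" by simp
qed

lemma self_neg_zero: "(z::'a::field_char_0) = - z \<Longrightarrow> z = 0"
  by simp

lemma int_int_same: "interior (v::nat \<Rightarrow> 'a::field_char_0) (interior v x) = (\<lambda>J. 0)"
  using int_int[of v v x] self_neg_zero by (auto simp: fun_eq_iff)
lemma eps_eps_same: "eps (v::nat \<Rightarrow> 'a::field_char_0) (eps v x) = (\<lambda>J. 0)"
  using eps_eps[of v v x] self_neg_zero by (auto simp: fun_eq_iff)

definition Dop :: "(nat \<Rightarrow> 'a::comm_ring_1) \<Rightarrow> (nat \<Rightarrow> 'a) \<Rightarrow> (nat set \<Rightarrow> 'a) \<Rightarrow> (nat set \<Rightarrow> 'a)" where
  "Dop v w x = (\<lambda>J. eps w (interior v x) J - eps v (interior w x) J)"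



lemma D_cubed:
  fixes v w :: "nat \<Rightarrow> 'a::field_char_0"
  assumes sx: "supp8 x"
  shows "Dop v w (Dop v w (Dop v w x)) =
    (\<lambda>J. - ((\<Sum>i<8. v i * v i) * (\<Sum>i<8. w i * w i) - (\<Sum>i<8. v i * w i)^2) * Dop v w x J)"
proof -
  define p where "p = (\<Sum>i<8. v i * v i)"
  define q where "q = (\<Sum>i<8. w i * w i)"
  define r where "r = (\<Sum>i<8. v i * w i)"
  have r': "(\<Sum>i<8. w i * v i) = r" by (simp add: r_def mult.commute)
  have r1: "\<And>x. supp8 x \<Longrightarrow> interior v (eps v x) = (\<lambda>J. p * x J - eps v (interior v x) J)"
    by (simp add: fun_eq_iff int_eps p_def)
  have r2: "\<And>x. supp8 x \<Longrightarrow> interior v (eps w x) = (\<lambda>J. r * x J - eps w (interior v x) J)"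
    by (simp add: fun_eq_iff int_eps r_def)
  have r3: "\<And>x. supp8 x \<Longrightarrow> interior w (eps v x) = (\<lambda>J. r * x J - eps v (interior w x) J)"
    using r' by (simp add: fun_eq_iff int_eps)
  have r4: "\<And>x. supp8 x \<Longrightarrow> interior w (eps w x) = (\<lambda>J. q * x J - eps w (interior w x) J)"
    by (simp add: fun_eq_iff int_eps q_def)
  have r5: "\<And>x. interior w (interior v x) = (\<lambda>J. - interior v (interior w x) J)"
    by (simp add: fun_eq_iff int_int[of w v])
  have r8: "\<And>x. eps w (eps v x) = (\<lambda>J. - eps v (eps w x) J)"
    by (simp add: fun_eq_iff eps_eps[of w v])
  note rules = r1 r2 r3 r4 r5 r8 int_int_same eps_eps_same
  show ?thesis
    unfolding p_def[symmetric] q_def[symmetric] r_def[symmetric] Dop_def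
    using sx
    apply (simp add: rules)
    apply (simp add: fun_eq_iff algebra_simps power2_eq_square)
    done
qed



lemma form_diff[simp]: "is_form k (f::nat set \<Rightarrow> 'a::ab_group_add) \<Longrightarrow> is_form k g \<Longrightarrow> is_form k (\<lambda>J. f J - g J)"
  unfolding is_form_def by (metis diff_self)
lemma form_add[simp]: "is_form k (f::nat set \<Rightarrow> 'a::monoid_add) \<Longrightarrow> is_form k g \<Longrightarrow> is_form k (\<lambda>J. f J + g J)"
  unfolding is_form_def by (metis add_0)
lemma form_neg[simp]: "is_form k (f::nat set \<Rightarrow> 'a::group_add) \<Longrightarrow> is_form k (\<lambda>J. - f J)"
  unfolding is_form_def by (metis neg_0_equal_iff_equal)
lemma form_smult[simp]: "is_form k (f::nat set \<Rightarrow> 'a::mult_zero) \<Longrightarrow> is_form k (\<lambda>J. c * f J)"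
  unfolding is_form_def by (metis mult_zero_right)

lemma int_eps_fun: "supp8 x \<Longrightarrow> interior v (eps w x) = (\<lambda>J. (\<Sum>i<8. v i * w i) * x J - eps w (interior v x) J)"
  by (simp add: fun_eq_iff int_eps)

lemma Dop_form: "is_form 4 x \<Longrightarrow> is_form 4 (Dop v w x)"
proof -
  assume x: "is_form 4 x"
  have "is_form 3 (interior v x)" "is_form 3 (interior w x)"
    using interior_form[OF x] by simp_all
  then have "is_form 4 (eps w (interior v x))" "is_form 4 (eps v (interior w x))"
    using eps_form by fastforce+
  then show ?thesis unfolding Dop_def by simp
qed

lemma Dop_diff[simp]: "Dop v w (\<lambda>J. f J - g J) = (\<lambda>J. Dop v w f J - Dop v w g J)"
  by (simp add: Dop_def fun_eq_iff algebra_simps)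
lemma Dop_add[simp]: "Dop v w (\<lambda>J. f J + g J) = (\<lambda>J. Dop v w f J + Dop v w g J)"
  by (simp add: Dop_def fun_eq_iff algebra_simps)
lemma Dop_neg[simp]: "Dop v w (\<lambda>J. - f J) = (\<lambda>J. - Dop v w f J)"
  by (simp add: Dop_def fun_eq_iff algebra_simps)
lemma Dop_smult[simp]: "Dop v w (\<lambda>J. c * f J) = (\<lambda>J. c * Dop v w f J)"
  by (simp add: Dop_def fun_eq_iff algebra_simps)

lemma opB_D:
  fixes v w :: "nat \<Rightarrow> 'a::comm_ring_1"
  assumes x: "is_form 4 x"
  shows "opB v w x = (\<lambda>J. - hodge (Dop v w x) J)"
proof -
  have f3: "is_form 3 (interior v x)" "is_form 3 (interior w x)"
    using interior_form[OF x] by simp_all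
  have "\<And>J. interior w (hodge (interior v x)) J = - hodge (eps w (interior v x)) J"
    using hodge_eps[OF f3(1), of w] by simp
  moreover have "\<And>J. interior v (hodge (interior w x)) J = - hodge (eps v (interior w x)) J"
    using hodge_eps[OF f3(2), of v] by simp
  ultimately show ?thesis by (simp add: opB_def Dop_def fun_eq_iff)
qed

lemma opB_form: "is_form 4 x \<Longrightarrow> is_form 4 (opB v w x)"
  using opB_D[of x v w] hodge_form[OF Dop_form, of x v w] by simp

lemma hodge_Dop:
  fixes v w :: "nat \<Rightarrow> 'a::comm_ring_1"
  assumes b: "is_form 4 b"
  shows "Dop v w (hodge b) = hodge (Dop v w b)"
proof -
  have ih: "\<And>u. interior u (hodge b) = hodge (eps u b)"
    using hodge_eps[OF b] by (simp add: fun_eq_iff)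
  have eh: "\<And>(u::nat \<Rightarrow> 'a) (g::nat set \<Rightarrow> 'a). is_form 5 g \<Longrightarrow> eps u (hodge g) = hodge (interior u g)"
  proof -
    fix u :: "nat \<Rightarrow> 'a" and g :: "nat set \<Rightarrow> 'a" assume g: "is_form 5 g"
    have hg: "is_form 3 (hodge g)" using hodge_form[OF g] by simp
    have hh: "hodge (hodge g) = (\<lambda>J. - g J)" using hodge_hodge[OF g] by (simp add: fun_eq_iff)
    have "hodge (eps u (hodge g)) = interior u g"
      using hodge_eps[OF hg, of u] by (simp add: hh fun_eq_iff)
    then have "hodge (hodge (eps u (hodge g))) = hodge (interior u g)" by simp
    moreover have "is_form 4 (eps u (hodge g))" using eps_form[OF hg] by simp
    ultimately show "eps u (hodge g) = hodge (interior u g)"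
      using hodge_hodge[of 4 "eps u (hodge g)"] by (simp add: fun_eq_iff)
  qed
  have e5: "\<And>u. is_form 5 (eps u b)" using eps_form[OF b] by simp
  have sb: "supp8 b" using b by (rule form_supp)
  have r': "(\<Sum>i<8. w i * v i) = (\<Sum>i<8. v i * w i)" by (simp add: mult.commute)
  have "Dop v w (hodge b) = (\<lambda>J. hodge (interior w (eps v b)) J - hodge (interior v (eps w b)) J)"
    unfolding Dop_def ih eh[OF e5] ..
  also have "\<dots> = hodge (Dop v w b)"
    using sb r' by (simp add: Dop_def int_eps_fun fun_eq_iff algebra_simps)
  finally show ?thesis .
qed

lemma opB_sq:
  fixes v w :: "nat \<Rightarrow> 'a::comm_ring_1"
  assumes x: "is_form 4 x"
  shows "opB v w (opB v w x) = Dop v w (Dop v w x)"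
proof -
  have d: "is_form 4 (Dop v w x)" using x by (rule Dop_form)
  have dd: "is_form 4 (Dop v w (Dop v w x))" using d by (rule Dop_form)
  have "opB v w (opB v w x) = (\<lambda>J. - hodge (Dop v w (opB v w x)) J)"
    using opB_form[OF x] by (rule opB_D)
  also have "\<dots> = (\<lambda>J. hodge (Dop v w (hodge (Dop v w x))) J)"
    by (simp add: opB_D[OF x])
  also have "\<dots> = (\<lambda>J. hodge (hodge (Dop v w (Dop v w x))) J)"
    by (simp add: hodge_Dop[OF d])
  also have "\<dots> = Dop v w (Dop v w x)"
    using hodge_hodge[OF dd] by (simp add: fun_eq_iff)
  finally show ?thesis .
qed

lemma opB_cubed:
  fixes v w :: "nat \<Rightarrow> 'a::field_char_0"
  assumes x: "is_form 4 x"
  shows "opB v w (opB v w (opB v w x)) =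
    (\<lambda>J. - ((\<Sum>i<8. v i * v i) * (\<Sum>i<8. w i * w i) - (\<Sum>i<8. v i * w i)^2) * opB v w x J)"
proof -
  have d: "is_form 4 (Dop v w x)" using x by (rule Dop_form)
  have dd: "is_form 4 (Dop v w (Dop v w x))" using d by (rule Dop_form)
  have "opB v w (opB v w (opB v w x)) = opB v w (Dop v w (Dop v w x))"
    by (simp add: opB_sq[OF x])
  also have "\<dots> = (\<lambda>J. - hodge (Dop v w (Dop v w (Dop v w x))) J)"
    using dd by (rule opB_D)
  also have "\<dots> = (\<lambda>J. - ((\<Sum>i<8. v i * v i) * (\<Sum>i<8. w i * w i) - (\<Sum>i<8. v i * w i)^2) * opB v w x J)"
    by (simp add: D_cubed[OF form_supp[OF x]] opB_D[OF x])
  finally show ?thesis .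
qed



definition pr :: "(nat set \<Rightarrow> 'a::comm_ring_1) \<Rightarrow> (nat set \<Rightarrow> 'a) \<Rightarrow> 'a" where
  "pr x y = (\<Sum>I\<in>Pow {..<8}. x I * y I)"

lemma pr_comm: "pr x y = pr y x"
  by (simp add: pr_def mult.commute)
lemma pr_diff1[simp]: "pr (\<lambda>J. f J - g J) y = pr f y - pr g y"
  by (simp add: pr_def sum_subtractf algebra_simps)
lemma pr_diff2[simp]: "pr y (\<lambda>J. f J - g J) = pr y f - pr y g"
  by (simp add: pr_def sum_subtractf algebra_simps)
lemma pr_neg1[simp]: "pr (\<lambda>J. - f J) y = - pr f y"
  by (simp add: pr_def sum_negf)
lemma pr_neg2[simp]: "pr y (\<lambda>J. - f J) = - pr y f"
  by (simp add: pr_def sum_negf)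

lemma adj_int: "pr (interior v x) y = pr x (eps v y)"
proof -
  let ?P = "Pow {..<8::nat}"
  have fP: "finite ?P" by simp
  have "pr (interior v x) y = (\<Sum>K\<in>?P. \<Sum>i\<in>{..<8} - K. (-1) ^ pos K i * v i * x (insert i K) * y K)"
    unfolding pr_def by (intro sum.cong refl) (simp add: interior_sub sum_distrib_right)
  also have "\<dots> = (\<Sum>(K, i)\<in>Sigma ?P (\<lambda>K. {..<8} - K). (-1) ^ pos K i * v i * x (insert i K) * y K)"
    by (rule sum.Sigma) auto
  also have "\<dots> = (\<Sum>(I, i)\<in>Sigma ?P (\<lambda>I. I). x I * ((-1) ^ pos I i * v i * y (I - {i})))"
  proof (rule sum.reindex_bij_witness[where j = "\<lambda>(K, i). (insert i K, i)" and i = "\<lambda>(I, i). (I - {i}, i)"])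
    fix a assume "a \<in> Sigma ?P (\<lambda>K. {..<8} - K)"
    then obtain K i where a: "a = (K, i)" "K \<subseteq> {..<8}" "i \<in> {..<8} - K" by auto
    then show "(case case a of (K, i) \<Rightarrow> (insert i K, i) of (I, i) \<Rightarrow> (I - {i}, i)) = a" by auto
    show "(case a of (K, i) \<Rightarrow> (insert i K, i)) \<in> Sigma ?P (\<lambda>I. I)" using a by auto
    have "insert i K - {i} = K" using a by auto
    then show "(case case a of (K, i) \<Rightarrow> (insert i K, i) of (I, i) \<Rightarrow> x I * ((-1) ^ pos I i * v i * y (I - {i}))) =
        (case a of (K, i) \<Rightarrow> (-1) ^ pos K i * v i * x (insert i K) * y K)"
      using a by (simp add: algebra_simps)
  next
    fix b assume "b \<in> Sigma ?P (\<lambda>I. I)"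
    then obtain I i where b: "b = (I, i)" "I \<subseteq> {..<8}" "i \<in> I" by auto
    then show "(case case b of (I, i) \<Rightarrow> (I - {i}, i) of (K, i) \<Rightarrow> (insert i K, i)) = b" by auto
    show "(case b of (I, i) \<Rightarrow> (I - {i}, i)) \<in> Sigma ?P (\<lambda>K. {..<8} - K)" using b by auto
  qed
  also have "\<dots> = (\<Sum>I\<in>?P. \<Sum>i\<in>I. x I * ((-1) ^ pos I i * v i * y (I - {i})))"
    by (rule sum.Sigma[symmetric]) (auto intro: finite_sub8)
  also have "\<dots> = pr x (eps v y)"
    unfolding pr_def by (intro sum.cong refl) (simp add: eps_sub sum_distrib_left)
  finally show ?thesis .
qed

lemma hsign_compl4:
  assumes "K \<subseteq> {..<8}" "card K = 4"
  shows "hsign K = hsign ({..<8} - K)"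
proof -
  have "hexp K + hexp ({..<8} - K) = 16" using hexp_compl[OF assms(1)] card_F_Diff[OF assms(1)] assms(2) by simp
  then have "even (hexp K + hexp ({..<8} - K))" by simp
  then have "even (hexp K) = even (hexp ({..<8} - K))" by auto
  then show ?thesis by (simp add: hsign_hexp minus_one_power_iff)
qed

lemma adj_hodge4:
  assumes x: "is_form 4 x"
  shows "pr (hodge x) y = pr x (hodge y)"
proof -
  let ?P = "Pow {..<8::nat}"
  have "pr (hodge x) y = (\<Sum>J\<in>?P. hsign ({..<8} - J) * x ({..<8} - J) * y J)"
    unfolding pr_def by (intro sum.cong refl) (simp add: hodge_sub)
  also have "\<dots> = (\<Sum>K\<in>?P. hsign K * x K * y ({..<8} - K))"
  proof (rule sum.reindex_bij_witness[where j = "\<lambda>K. {..<8} - K" and i = "\<lambda>K. {..<8} - K"])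
    fix K assume K: "K \<in> ?P"
    then have e: "{..<8} - ({..<8} - K) = K" by auto
    then show "{..<8} - ({..<8} - K) = K" .
    show "{..<8} - K \<in> ?P" by auto
    show "hsign ({..<8} - K) * x ({..<8} - K) * y ({..<8} - ({..<8} - K)) = hsign ({..<8} - K) * x ({..<8} - K) * y K"
      using e by simp
  qed auto
  also have "\<dots> = (\<Sum>K\<in>?P. x K * (hsign ({..<8} - K) * y ({..<8} - K)))"
  proof (intro sum.cong refl)
    fix K assume K: "K \<in> ?P"
    show "hsign K * x K * y ({..<8} - K) = x K * (hsign ({..<8} - K) * y ({..<8} - K))"
    proof (cases "x K = 0")
      case False
      then have "card K = 4" using x by (simp add: is_form_def idx_sets_def)
      then have h: "hsign K = hsign ({..<8} - K)" using K by (intro hsign_compl4) auto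
      show ?thesis unfolding h mult.assoc by (rule mult.left_commute)
    qed simp
  qed
  also have "\<dots> = pr x (hodge y)"
    unfolding pr_def by (intro sum.cong refl) (simp add: hodge_sub)
  finally show ?thesis .
qed

lemma adj_D: "pr (Dop v w x) y = - pr x (Dop v w y)"
proof -
  have "pr (Dop v w x) y = pr y (eps w (interior v x)) - pr y (eps v (interior w x))"
    by (simp add: Dop_def pr_comm[of _ y])
  also have "\<dots> = pr x (eps v (interior w y)) - pr x (eps w (interior v y))"
    by (simp add: adj_int[symmetric] pr_comm)
  also have "\<dots> = - pr x (Dop v w y)"
    by (simp add: Dop_def)
  finally show ?thesis .
qed

lemma opB_skew:
  fixes v w :: "nat \<Rightarrow> 'a::comm_ring_1"
  assumes a: "is_form 4 a" and b: "is_form 4 b"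
  shows "pr (opB v w a) b = - pr a (opB v w b)"
proof -
  have "pr (opB v w a) b = - pr (hodge (Dop v w a)) b" by (simp add: opB_D[OF a])
  also have "\<dots> = - pr (Dop v w a) (hodge b)" using Dop_form[OF a] by (simp add: adj_hodge4)
  also have "\<dots> = pr a (Dop v w (hodge b))" by (simp add: adj_D)
  also have "\<dots> = pr a (hodge (Dop v w b))" by (simp add: hodge_Dop[OF b])
  also have "\<dots> = - pr a (opB v w b)" by (simp add: opB_D[OF b])
  finally show ?thesis .
qed

lemma inner4_pr:
  assumes "is_form 4 x"
  shows "inner4 x y = pr x y"
  unfolding inner4_def pr_def
proof (rule sum.mono_neutral_left)
  show "finite (Pow {..<8::nat})" by simp
  show "idx_sets 4 \<subseteq> Pow {..<8}" by (auto simp: idx_sets_def)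
  show "\<forall>i\<in>Pow {..<8} - idx_sets 4. x i * y i = 0"
    using assms by (auto simp: is_form_def)
qed

lemma part1:
  fixes v w :: "nat \<Rightarrow> real"
  shows "\<forall>\<alpha> \<beta>. is_form 4 \<alpha> \<longrightarrow> is_form 4 \<beta> \<longrightarrow>
            inner4 (opB v w \<alpha>) \<beta> = - inner4 \<alpha> (opB v w \<beta>)"
  using opB_skew opB_form inner4_pr by metis



definition ind :: "nat set \<Rightarrow> nat set \<Rightarrow> 'a::comm_ring_1" where
  "ind S = (\<lambda>J. if J = S then 1 else 0)"

lemma ind_form: "S \<subseteq> {..<8} \<Longrightarrow> card S = k \<Longrightarrow> is_form k (ind S)"
  by (simp add: is_form_def ind_def idx_sets_def)

lemma int_ind_single:
  assumes a: "a \<notin> K" "a < 8" and K: "K \<subseteq> {..<8}"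
  shows "interior u (ind (insert a K)) K = (-1) ^ pos K a * u a"
proof -
  have "interior u (ind (insert a K)) K = (\<Sum>i\<in>{..<8} - K. if i = a then (-1) ^ pos K i * u i else 0)"
    unfolding interior_sub[OF K]
  proof (intro sum.cong refl)
    fix i assume i: "i \<in> {..<8} - K"
    have "insert i K = insert a K \<longleftrightarrow> i = a" using i a by blast
    then show "(-1) ^ pos K i * u i * ind (insert a K) (insert i K) = (if i = a then (-1) ^ pos K i * u i else 0)"
      by (simp add: ind_def)
  qed
  also have "\<dots> = (-1) ^ pos K a * u a" using a by (simp add: sum.delta')
  finally show ?thesis .
qed

lemma int_ind_nz:
  assumes "interior u (ind I) J \<noteq> 0"
  shows "\<exists>b. b \<notin> J \<and> I = insert b J"
proof -
  have J: "J \<subseteq> {..<8}" using assms by (auto simp: interior_def split: if_splits)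
  with assms have "(\<Sum>i\<in>{..<8}-J. (-1)^pos J i * u i * ind I (insert i J)) \<noteq> 0" by (simp add: interior_sub)
  then obtain i where i: "i \<in> {..<8} - J" "(-1)^pos J i * u i * ind I (insert i J) \<noteq> 0"
    by (rule sum.not_neutral_contains_not_neutral)
  then have "insert i J = I" by (auto simp: ind_def split: if_splits)
  then show ?thesis using i by blast
qed

lemma sum_two:
  assumes "finite S" "i \<in> S" "j \<in> S" "i \<noteq> j" "\<And>a. a \<in> S \<Longrightarrow> a \<noteq> i \<Longrightarrow> a \<noteq> j \<Longrightarrow> f a = 0"
  shows "sum f S = f i + f j"
proof -
  have "sum f S = sum f {i, j}"
    using assms by (intro sum.mono_neutral_right) auto
  then show ?thesis using assms(4) by simp
qed

lemma kernel_val: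
  fixes v w :: "nat \<Rightarrow> 'a::comm_ring_1"
  assumes ij: "i < j" "j < 8" and K: "K \<subseteq> {..<8}" "i \<notin> K" "j \<notin> K"
  shows "interior v (interior w (ind (insert i (insert j K)))) K =
     (-1) ^ (pos K i + pos K j) * (v j * w i - v i * w j)"
proof -
  let ?I = "insert i (insert j K)"
  let ?f = "\<lambda>a. (-1) ^ pos K a * v a * interior w (ind ?I) (insert a K)"
  have "interior v (interior w (ind ?I)) K = sum ?f ({..<8} - K)"
    by (rule interior_sub[OF K(1)])
  also have "\<dots> = ?f i + ?f j"
  proof (rule sum_two)
    fix a assume a: "a \<in> {..<8} - K" "a \<noteq> i" "a \<noteq> j"
    show "?f a = 0"
    proof (rule ccontr)
      assume "?f a \<noteq> 0"
      then have "interior w (ind ?I) (insert a K) \<noteq> 0" by auto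
      then obtain b where "?I = insert b (insert a K)" using int_ind_nz by blast
      then have "a \<in> ?I" by auto
      then show False using a by auto
    qed
  qed (use ij K in auto)
  also have "interior w (ind ?I) (insert i K) = (-1) ^ pos (insert i K) j * w j"
  proof -
    have "?I = insert j (insert i K)" by auto
    then show ?thesis using ij K by (simp add: int_ind_single)
  qed
  also have "interior w (ind ?I) (insert j K) = (-1) ^ pos (insert j K) i * w i"
    using ij K by (simp add: int_ind_single)
  also have "pos (insert i K) j = pos K j + 1" using ij K by (simp add: pos_insert)
  also have "pos (insert j K) i = pos K i" using ij K by (simp add: pos_insert)
  finally show ?thesis by (simp add: power_add algebra_simps)
qed

lemma eps_single:
  assumes J: "insert j K \<subseteq> {..<8}" "j \<notin> K"
    and y: "\<And>L. y L \<noteq> 0 \<Longrightarrow> L = K \<or> j \<notin> L"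
  shows "eps u y (insert j K) = (-1) ^ pos (insert j K) j * u j * y K"
proof -
  let ?f = "\<lambda>l. (-1) ^ pos (insert j K) l * u l * y (insert j K - {l})"
  have "eps u y (insert j K) = sum ?f (insert j K)" by (rule eps_sub[OF J(1)])
  also have "\<dots> = ?f j + sum ?f K"
    using J finite_sub8[of K] by (intro sum.insert) auto
  also have "sum ?f K = 0"
  proof (rule sum.neutral, rule ballI)
    fix l assume l: "l \<in> K"
    then have "j \<in> insert j K - {l}" "insert j K - {l} \<noteq> K" using J by auto
    then have "y (insert j K - {l}) = 0" using y[of "insert j K - {l}"] by blast
    then show "?f l = 0" by simp
  qed
  also have "insert j K - {j} = K" using J by auto
  finally show ?thesis by simp
qed

lemma Dop_val:
  fixes v w :: "nat \<Rightarrow> 'a::comm_ring_1"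
  assumes K: "K \<subseteq> {..<8}" "i \<notin> K" "j \<notin> K" "i \<noteq> j" "i < 8" "j < 8"
  shows "Dop v w (ind (insert i K)) (insert j K) =
     (-1) ^ (pos K j + pos K i) * (v i * w j - v j * w i)"
proof -
  have y: "\<And>(u::nat \<Rightarrow> 'a) L. interior u (ind (insert i K)) L \<noteq> 0 \<Longrightarrow> L = K \<or> j \<notin> L"
  proof -
    fix u :: "nat \<Rightarrow> 'a" and L assume "interior u (ind (insert i K)) L \<noteq> 0"
    then obtain b where "insert i K = insert b L" using int_ind_nz by blast
    then show "L = K \<or> j \<notin> L" using K by (metis insertCI insertE)
  qed
  have J: "insert j K \<subseteq> {..<8}" using K by auto
  have e: "\<And>(u::nat \<Rightarrow> 'a) u'. eps u (interior u' (ind (insert i K))) (insert j K) = (-1) ^ pos K j * u j * ((-1) ^ pos K i * u' i)"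
  proof -
    fix u u' :: "nat \<Rightarrow> 'a"
    have "eps u (interior u' (ind (insert i K))) (insert j K) = (-1) ^ pos (insert j K) j * u j * interior u' (ind (insert i K)) K"
      by (rule eps_single[OF J K(3)]) (rule y)
    then show "eps u (interior u' (ind (insert i K))) (insert j K) = (-1) ^ pos K j * u j * ((-1) ^ pos K i * u' i)"
      using K by (simp add: int_ind_single)
  qed
  show ?thesis unfolding Dop_def e by (simp add: power_add algebra_simps)
qed



lemma opB_smult[simp]: "opB v w (\<lambda>J. c * f J) = (\<lambda>J. c * opB v w f J)"
  by (simp add: opB_def fun_eq_iff algebra_simps)
lemma opB_add[simp]: "opB v w (\<lambda>J. f J + g J) = (\<lambda>J. opB v w f J + opB v w g J)"
  by (simp add: opB_def fun_eq_iff algebra_simps)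
lemma hodge_zero[simp]: "hodge (\<lambda>J. 0) = (\<lambda>J. 0)"
  by (simp add: hodge_def fun_eq_iff)

lemma lagrange:
  fixes v w :: "nat \<Rightarrow> real"
  shows "(\<Sum>i<8. \<Sum>j<8. (v i * w j - v j * w i)^2) =
    2 * ((\<Sum>i<8. v i * v i) * (\<Sum>i<8. w i * w i) - (\<Sum>i<8. v i * w i)^2)"
proof -
  have "(\<Sum>i<8. \<Sum>j<8. (v i * w j - v j * w i)^2) =
     (\<Sum>i<8. \<Sum>j<8. v i * v i * (w j * w j) + v j * v j * (w i * w i) - 2 * ((v i * w i) * (v j * w j)))"
    by (intro sum.cong refl) (simp add: power2_eq_square algebra_simps)
  also have "\<dots> = (\<Sum>i<8. \<Sum>j<8. v i * v i * (w j * w j)) + (\<Sum>i<8. \<Sum>j<8. v j * v j * (w i * w i))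
      - 2 * (\<Sum>i<8. \<Sum>j<8. (v i * w i) * (v j * w j))"
    by (simp add: sum.distrib sum_subtractf sum_distrib_left)
  also have "\<dots> = (\<Sum>i<8. v i * v i) * (\<Sum>i<8. w i * w i) + (\<Sum>i<8. w i * w i) * (\<Sum>i<8. v i * v i)
      - 2 * ((\<Sum>i<8. v i * w i) * (\<Sum>i<8. v i * w i))"
    by (simp only: sum_product mult.commute[of "v _ * v _"])
  also have "\<dots> = 2 * ((\<Sum>i<8. v i * v i) * (\<Sum>i<8. w i * w i) - (\<Sum>i<8. v i * w i)^2)"
    by (simp add: power2_eq_square algebra_simps)
  finally show ?thesis .
qed

definition realf :: "(nat set \<Rightarrow> complex) \<Rightarrow> bool" where
  "realf x \<longleftrightarrow> (\<forall>J. x J \<in> \<real>)"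

lemma realf_interior: "realf x \<Longrightarrow> realf (interior (\<lambda>i. complex_of_real (v i)) x)"
  by (auto simp: realf_def interior_def)
lemma realf_hodge: "realf x \<Longrightarrow> realf (hodge x)"
  by (auto simp: realf_def hodge_def hsign_def)
lemma realf_opB: "realf x \<Longrightarrow> realf (opB (\<lambda>i. complex_of_real (v i)) (\<lambda>i. complex_of_real (w i)) x)"
  using realf_interior realf_hodge unfolding opB_def realf_def by (metis Reals_diff)
lemma realf_ind: "realf (ind S)"
  by (simp add: realf_def ind_def)

lemma interior_scale:
  assumes "\<And>i. i < 8 \<Longrightarrow> b i = t * a i"
  shows "interior b x = (\<lambda>J. t * interior a x J)"
  using assms by (simp add: fun_eq_iff interior_def sum_distrib_left algebra_simps)
lemma eps_scale:
  assumes "\<And>i. i < 8 \<Longrightarrow> b i = t * a i"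
  shows "eps b x = (\<lambda>J. t * eps a x J)"
proof -
  have "\<And>J. J \<subseteq> {..<8} \<Longrightarrow> (\<Sum>i\<in>J. (-1) ^ pos J i * b i * x (J - {i})) = t * (\<Sum>i\<in>J. (-1) ^ pos J i * a i * x (J - {i}))"
    unfolding sum_distrib_left by (intro sum.cong refl) (use assms in auto)
  then show ?thesis by (simp add: fun_eq_iff eps_def)
qed
lemma interior_vzero:
  assumes "\<And>i. i < 8 \<Longrightarrow> b i = 0"
  shows "interior b x = (\<lambda>J. 0)"
  using interior_scale[of b 0 b x] assms by simp
lemma eps_vzero:
  assumes "\<And>i. i < 8 \<Longrightarrow> b i = 0"
  shows "eps b x = (\<lambda>J. 0)"
  using eps_scale[of b 0 b x] assms by simp



lemma sub_dir:
  fixes B :: "(nat set \<Rightarrow> complex) \<Rightarrow> (nat set \<Rightarrow> complex)" and k0 :: complex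
  assumes cub: "\<And>x. is_form 4 x \<Longrightarrow> B (B (B x)) = (\<lambda>J. - (k0 ^ 2) * B x J)"
    and lin: "\<And>k f. B (\<lambda>J. k * f J) = (\<lambda>J. k * B f J)"
    and f: "is_form 4 a" "a \<noteq> (\<lambda>_. 0)" and ev: "B a = (\<lambda>I. mu * a I)"
  shows "mu \<in> {0, \<i> * k0, - \<i> * k0}"
proof -
  obtain J where J: "a J \<noteq> 0" using f(2) by auto
  have "B (B a) = (\<lambda>I. mu * (mu * a I))" by (simp add: ev lin)
  then have "B (B (B a)) = (\<lambda>I. mu * (mu * (mu * a I)))" by (simp add: ev lin)
  then have "mu * (mu * (mu * a J)) = - (k0 ^ 2) * (mu * a J)" using cub[OF f(1)] ev by (metis)
  then have "(mu * (mu - \<i> * k0) * (mu + \<i> * k0)) * a J = 0"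
    by (simp add: algebra_simps power2_eq_square)
  then have "mu * (mu - \<i> * k0) * (mu + \<i> * k0) = 0" using J by simp
  then have "mu = 0 \<or> mu - \<i> * k0 = 0 \<or> mu + \<i> * k0 = 0" by (simp only: mult_eq_0_iff) blast
  moreover have "mu + \<i> * k0 = 0 \<Longrightarrow> mu = - \<i> * k0" by (simp add: add_eq_0_iff2)
  ultimately show ?thesis by auto
qed



lemma eig_from:
  fixes B :: "(nat set \<Rightarrow> complex) \<Rightarrow> (nat set \<Rightarrow> complex)" and k0 :: real and z :: complex
  assumes cub: "\<And>x. is_form 4 x \<Longrightarrow> B (B (B x)) = (\<lambda>J. - (complex_of_real k0 ^ 2) * B x J)"
    and lin: "\<And>k f. B (\<lambda>J. k * f J) = (\<lambda>J. k * B f J)"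
    and lin2: "\<And>f g. B (\<lambda>J. f J + g J) = (\<lambda>J. B f J + B g J)"
    and frm: "\<And>x. is_form 4 x \<Longrightarrow> is_form 4 (B x)"
    and rl: "\<And>x. realf x \<Longrightarrow> realf (B x)"
    and x: "is_form 4 x" "realf x" "B x J0 \<noteq> 0"
    and z: "z = \<i> * complex_of_real k0 \<or> z = - \<i> * complex_of_real k0" and k0: "k0 \<noteq> 0"
  shows "\<exists>\<alpha>. is_form 4 \<alpha> \<and> \<alpha> \<noteq> (\<lambda>_. 0) \<and> B \<alpha> = (\<lambda>I. z * \<alpha> I)"
proof -
  define y where "y = (\<lambda>J. B (B x) J + z * B x J)"
  have fy: "is_form 4 y" unfolding y_def using frm[OF frm[OF x(1)]] frm[OF x(1)] by simp
  have sq: "(\<i> * K) * (\<i> * K) = - (K ^ 2)" for K :: complex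
  proof -
    have "(\<i> * K) * (\<i> * K) = (\<i> * \<i>) * (K * K)" by (simp only: mult_ac)
    then show ?thesis by (simp add: power2_eq_square)
  qed
  have z2: "z * z = - (complex_of_real k0 ^ 2)" using z sq by auto
  have By: "B y = (\<lambda>I. z * y I)"
  proof -
    have "B y = (\<lambda>J. B (B (B x)) J + z * B (B x) J)" unfolding y_def by (simp add: lin lin2)
    also have "\<dots> = (\<lambda>J. - (complex_of_real k0 ^ 2) * B x J + z * B (B x) J)" by (simp add: cub[OF x(1)])
    also have "\<dots> = (\<lambda>I. z * y I)" unfolding y_def z2[symmetric] by (simp add: algebra_simps fun_eq_iff)
    finally show ?thesis .
  qed
  have "B (B x) J0 \<in> \<real>" "B x J0 \<in> \<real>" using rl[OF rl[OF x(2)]] rl[OF x(2)] by (auto simp: realf_def)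
  then obtain a b where ab: "B (B x) J0 = complex_of_real a" "B x J0 = complex_of_real b" by (metis Reals_cases)
  then have b: "b \<noteq> 0" using x(3) by auto
  have "Im (y J0) = Im z * b" unfolding y_def ab by simp
  moreover have "Im z \<noteq> 0" using z k0 by auto
  ultimately have "y J0 \<noteq> 0" using b by auto
  then have "y \<noteq> (\<lambda>_. 0)" by auto
  then show ?thesis using fy By by blast
qed

lemma Dop_zero_par:
  fixes v w :: "nat \<Rightarrow> real"
  assumes par: "\<And>i j. i < 8 \<Longrightarrow> j < 8 \<Longrightarrow> v i * w j = v j * w i"
  shows "Dop (\<lambda>i. complex_of_real (v i)) (\<lambda>i. complex_of_real (w i)) x = (\<lambda>J. 0)"
proof (cases "\<forall>i<8. v i = 0")
  case True
  then have "interior (\<lambda>i. complex_of_real (v i)) x = (\<lambda>J. 0)" "\<And>y. eps (\<lambda>i. complex_of_real (v i)) y = (\<lambda>J. 0)"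
    by (auto intro!: interior_vzero eps_vzero)
  then show ?thesis by (simp add: Dop_def)
next
  case False
  then obtain k where k: "k < 8" "v k \<noteq> 0" by auto
  define t where "t = w k / v k"
  have wt: "\<And>i. i < 8 \<Longrightarrow> complex_of_real (w i) = complex_of_real t * complex_of_real (v i)"
  proof -
    fix i :: nat assume "i < 8"
    then have "v k * w i = v i * w k" using par k by auto
    then have "w i = t * v i" using k by (simp add: t_def field_simps)
    then show "complex_of_real (w i) = complex_of_real t * complex_of_real (v i)" by simp
  qed
  have "interior (\<lambda>i. complex_of_real (w i)) x = (\<lambda>J. complex_of_real t * interior (\<lambda>i. complex_of_real (v i)) x J)"
    by (rule interior_scale) (simp add: wt)
  moreover have "\<And>y. eps (\<lambda>i. complex_of_real (w i)) y = (\<lambda>J. complex_of_real t * eps (\<lambda>i. complex_of_real (v i)) y J)"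
    by (rule eps_scale) (simp add: wt)
  ultimately show ?thesis by (simp add: Dop_def)
qed



lemma card_F_minus2: "i < 8 \<Longrightarrow> j < 8 \<Longrightarrow> i \<noteq> j \<Longrightarrow> card ({..<8::nat} - {i, j}) = 6"
  by (simp add: card_Diff_subset)

lemma kernel_vec:
  fixes v w :: "nat \<Rightarrow> real"
  assumes ij: "i < j" "j < 8" and d: "v i * w j \<noteq> v j * w i"
  shows "\<exists>\<alpha>. is_form 4 \<alpha> \<and> \<alpha> \<noteq> (\<lambda>_. 0) \<and>
     opB (\<lambda>i. complex_of_real (v i)) (\<lambda>i. complex_of_real (w i)) \<alpha> = (\<lambda>I. 0 * \<alpha> I)"
proof -
  let ?vc = "\<lambda>i. complex_of_real (v i)" and ?wc = "\<lambda>i. complex_of_real (w i)"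
  have "4 \<le> card ({..<8::nat} - {i, j})" using ij by (simp add: card_F_minus2)
  then obtain K where K: "K \<subseteq> {..<8} - {i, j}" "card K = 4" "finite K"
    by (rule obtain_subset_with_card_n)
  let ?I = "insert i (insert j K)"
  have nK: "i \<notin> K" "j \<notin> K" using K(1) by auto
  have cI: "card ?I = 6" using K ij nK by simp
  have fI: "is_form 6 (ind ?I :: nat set \<Rightarrow> complex)" using K ij cI by (intro ind_form) auto
  define a where "a = interior ?vc (interior ?wc (ind ?I))"
  have fa: "is_form 4 a" unfolding a_def using interior_form[OF interior_form[OF fI]] by simp
  have "a K = (-1) ^ (pos K i + pos K j) * (?vc j * ?wc i - ?vc i * ?wc j)"
    unfolding a_def using ij K by (intro kernel_val) auto
  moreover have "?vc j * ?wc i - ?vc i * ?wc j \<noteq> 0"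
  proof
    assume "?vc j * ?wc i - ?vc i * ?wc j = 0"
    then have "complex_of_real (v j * w i - v i * w j) = 0" by (simp only: of_real_diff of_real_mult)
    then have "v j * w i - v i * w j = 0" by (simp only: of_real_eq_0_iff)
    then show False using d by linarith
  qed
  ultimately have "a K \<noteq> 0" by simp
  then have anz: "a \<noteq> (\<lambda>_. 0)" by auto
  have i1: "interior ?vc a = (\<lambda>J. 0)" unfolding a_def by (rule int_int_same)
  have i2: "interior ?wc a = (\<lambda>J. 0)"
  proof -
    have "interior ?wc a = (\<lambda>J. - interior ?vc (interior ?wc (interior ?wc (ind ?I))) J)"
      unfolding a_def by (simp add: fun_eq_iff int_int[of ?wc ?vc])
    then show ?thesis by (simp add: int_int_same)
  qed
  have "Dop ?vc ?wc a = (\<lambda>J. 0)" by (simp add: Dop_def i1 i2)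
  then have "opB ?vc ?wc a = (\<lambda>I. 0 * a I)" by (simp add: opB_D[OF fa])
  then show ?thesis using fa anz by blast
qed

lemma eig_vecs:
  fixes v w :: "nat \<Rightarrow> real" and k0 :: real
  assumes ij: "i \<noteq> j" "i < 8" "j < 8" and d: "v i * w j \<noteq> v j * w i" and k0: "k0 \<noteq> 0"
    and cub: "\<And>x. is_form 4 x \<Longrightarrow>
       opB (\<lambda>i. complex_of_real (v i)) (\<lambda>i. complex_of_real (w i)) (opB (\<lambda>i. complex_of_real (v i)) (\<lambda>i. complex_of_real (w i)) (opB (\<lambda>i. complex_of_real (v i)) (\<lambda>i. complex_of_real (w i)) x))
        = (\<lambda>J. - (complex_of_real k0 ^ 2) * opB (\<lambda>i. complex_of_real (v i)) (\<lambda>i. complex_of_real (w i)) x J)"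
    and z: "z = \<i> * complex_of_real k0 \<or> z = - \<i> * complex_of_real k0"
  shows "\<exists>\<alpha>. is_form 4 \<alpha> \<and> \<alpha> \<noteq> (\<lambda>_. 0) \<and>
     opB (\<lambda>i. complex_of_real (v i)) (\<lambda>i. complex_of_real (w i)) \<alpha> = (\<lambda>I. z * \<alpha> I)"
proof -
  let ?vc = "\<lambda>i. complex_of_real (v i)" and ?wc = "\<lambda>i. complex_of_real (w i)"
  have "3 \<le> card ({..<8::nat} - {i, j})" using ij by (simp add: card_F_minus2)
  then obtain K where K: "K \<subseteq> {..<8} - {i, j}" "card K = 3" "finite K"
    by (rule obtain_subset_with_card_n)
  define x where "x = (ind (insert i K) :: nat set \<Rightarrow> complex)"
  have nK: "i \<notin> K" using K(1) by auto
  have fx: "is_form 4 x" unfolding x_def using K ij nK by (intro ind_form) auto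
  have rx: "realf x" unfolding x_def by (rule realf_ind)
  let ?J' = "insert j K"
  have J': "?J' \<subseteq> {..<8}" using K ij by auto
  have Dv: "Dop ?vc ?wc x ?J' = (-1) ^ (pos K j + pos K i) * (?vc i * ?wc j - ?vc j * ?wc i)"
    unfolding x_def using K ij by (intro Dop_val) auto
  have "?vc i * ?wc j - ?vc j * ?wc i \<noteq> 0"
  proof
    assume "?vc i * ?wc j - ?vc j * ?wc i = 0"
    then have "complex_of_real (v i * w j - v j * w i) = 0" by (simp only: of_real_diff of_real_mult)
    then have "v i * w j - v j * w i = 0" by (simp only: of_real_eq_0_iff)
    then show False using d by linarith
  qed
  then have Dnz: "Dop ?vc ?wc x ?J' \<noteq> 0" unfolding Dv by simp
  have "opB ?vc ?wc x ({..<8} - ?J') = - (hsign ?J' * Dop ?vc ?wc x ?J')"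
    using J' by (simp add: opB_D[OF fx] hodge_sub F_Diff_Diff)
  moreover have "hsign ?J' \<noteq> (0::complex)" by (simp add: hsign_hexp)
  ultimately have Bnz: "opB ?vc ?wc x ({..<8} - ?J') \<noteq> 0" using Dnz by simp
  show ?thesis
    by (rule eig_from[OF cub _ _ opB_form realf_opB fx rx Bnz z k0]) simp_all
qed

lemma deg_vec:
  fixes v w :: "nat \<Rightarrow> real"
  assumes par: "\<And>i j. i < 8 \<Longrightarrow> j < 8 \<Longrightarrow> v i * w j = v j * w i"
  shows "\<exists>\<alpha>. is_form 4 \<alpha> \<and> \<alpha> \<noteq> (\<lambda>_. 0) \<and>
     opB (\<lambda>i. complex_of_real (v i)) (\<lambda>i. complex_of_real (w i)) \<alpha> = (\<lambda>I. 0 * \<alpha> I)"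
proof -
  define a where "a = (ind {0, 1, 2, 3} :: nat set \<Rightarrow> complex)"
  have fa: "is_form 4 a" unfolding a_def by (intro ind_form) auto
  have "a {0, 1, 2, 3} = 1" by (simp add: a_def ind_def)
  then have anz: "a \<noteq> (\<lambda>_. 0)" by auto
  have "opB (\<lambda>i. complex_of_real (v i)) (\<lambda>i. complex_of_real (w i)) a = (\<lambda>I. 0 * a I)"
    by (simp add: opB_D[OF fa] Dop_zero_par[OF par])
  then show ?thesis using fa anz by blast
qed



theorem mainTheorem17:
  fixes v w :: "nat \<Rightarrow> real"
  shows "(\<forall>\<alpha> \<beta>. is_form 4 \<alpha> \<longrightarrow> is_form 4 \<beta> \<longrightarrow>
            inner4 (opB v w \<alpha>) \<beta> = - inner4 \<alpha> (opB v w \<beta>))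
       \<and> {mu::complex. \<exists>\<alpha>. is_form 4 \<alpha> \<and> \<alpha> \<noteq> (\<lambda>_. 0) \<and>
            opB (\<lambda>i. complex_of_real (v i)) (\<lambda>i. complex_of_real (w i)) \<alpha> = (\<lambda>I. mu * \<alpha> I)}
         = {0, \<i> * complex_of_real (wedge_norm v w), - \<i> * complex_of_real (wedge_norm v w)}"
proof -
  let ?vc = "\<lambda>i. complex_of_real (v i)" and ?wc = "\<lambda>i. complex_of_real (w i)"
  define p where "p = (\<Sum>i<8. v i * v i)"
  define q where "q = (\<Sum>i<8. w i * w i)"
  define r where "r = (\<Sum>i<8. v i * w i)"
  define cc where "cc = p * q - r ^ 2"
  have lag: "(\<Sum>i<8. \<Sum>j<8. (v i * w j - v j * w i)^2) = 2 * cc"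
    unfolding cc_def p_def q_def r_def by (rule lagrange)
  have "0 \<le> (\<Sum>i<8. \<Sum>j<8. (v i * w j - v j * w i)^2)"
    by (intro sum_nonneg) auto
  then have cc0: "0 \<le> cc" using lag by simp
  define c where "c = wedge_norm v w"
  have cs: "c = sqrt cc" unfolding c_def wedge_norm_def cc_def p_def q_def r_def by (simp add: power2_eq_square)
  have csq: "c ^ 2 = cc" using cc0 cs by simp
  have sp: "(\<Sum>i<8. ?vc i * ?vc i) = complex_of_real p" by (simp add: p_def)
  have sq: "(\<Sum>i<8. ?wc i * ?wc i) = complex_of_real q" by (simp add: q_def)
  have sr: "(\<Sum>i<8. ?vc i * ?wc i) = complex_of_real r" by (simp add: r_def)
  have cub: "\<And>x. is_form 4 x \<Longrightarrow> opB ?vc ?wc (opB ?vc ?wc (opB ?vc ?wc x)) =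
      (\<lambda>J. - (complex_of_real c ^ 2) * opB ?vc ?wc x J)"
  proof -
    fix x :: "nat set \<Rightarrow> complex" assume x: "is_form 4 x"
    have e: "complex_of_real p * complex_of_real q - complex_of_real r ^ 2 = complex_of_real c ^ 2"
      using csq unfolding cc_def by (metis of_real_diff of_real_mult of_real_power)
    show "opB ?vc ?wc (opB ?vc ?wc (opB ?vc ?wc x)) = (\<lambda>J. - (complex_of_real c ^ 2) * opB ?vc ?wc x J)"
      using opB_cubed[OF x, of ?vc ?wc] unfolding sp sq sr e .
  qed
  have sub: "{mu::complex. \<exists>\<alpha>. is_form 4 \<alpha> \<and> \<alpha> \<noteq> (\<lambda>_. 0) \<and> opB ?vc ?wc \<alpha> = (\<lambda>I. mu * \<alpha> I)}
      \<subseteq> {0, \<i> * complex_of_real c, - \<i> * complex_of_real c}"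
  proof
    fix mu assume "mu \<in> {mu::complex. \<exists>\<alpha>. is_form 4 \<alpha> \<and> \<alpha> \<noteq> (\<lambda>_. 0) \<and> opB ?vc ?wc \<alpha> = (\<lambda>I. mu * \<alpha> I)}"
    then obtain a where a: "is_form 4 a" "a \<noteq> (\<lambda>_. 0)" "opB ?vc ?wc a = (\<lambda>I. mu * a I)" by auto
    show "mu \<in> {0, \<i> * complex_of_real c, - \<i> * complex_of_real c}"
      by (rule sub_dir[OF cub opB_smult a])
  qed
  have sup: "{0, \<i> * complex_of_real c, - \<i> * complex_of_real c} \<subseteq>
      {mu::complex. \<exists>\<alpha>. is_form 4 \<alpha> \<and> \<alpha> \<noteq> (\<lambda>_. 0) \<and> opB ?vc ?wc \<alpha> = (\<lambda>I. mu * \<alpha> I)}"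
  proof (cases "\<exists>i j. i < 8 \<and> j < 8 \<and> v i * w j \<noteq> v j * w i")
    case True
    then obtain i j where ij: "i < 8" "j < 8" "v i * w j \<noteq> v j * w i" by auto
    then have ij': "i \<noteq> j" by auto
    obtain i' j' where ij2: "i' < j'" "j' < 8" "v i' * w j' \<noteq> v j' * w i'"
    proof (cases "i < j")
      case True then show ?thesis using that ij by blast
    next
      case False then have "j < i" using ij' by simp
      then show ?thesis using that[of j i] ij by auto
    qed
    have "(v i * w j - v j * w i)^2 \<le> (\<Sum>j'<8. (v i * w j' - v j' * w i)^2)"
      using ij by (intro member_le_sum) auto
    also have "\<dots> \<le> (\<Sum>i'<8. \<Sum>j'<8. (v i' * w j' - v j' * w i')^2)"
      using ij by (intro member_le_sum[of i]) (auto intro: sum_nonneg)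
    finally have "(v i * w j - v j * w i)^2 \<le> 2 * cc" using lag by simp
    moreover have "0 < (v i * w j - v j * w i)^2" using ij by simp
    ultimately have "0 < cc" by linarith
    then have cpos: "c \<noteq> 0" using cs by simp
    have k: "\<exists>\<alpha>. is_form 4 \<alpha> \<and> \<alpha> \<noteq> (\<lambda>_. 0) \<and> opB ?vc ?wc \<alpha> = (\<lambda>I. 0 * \<alpha> I)"
      using kernel_vec[OF ij2] .
    have e1: "\<exists>\<alpha>. is_form 4 \<alpha> \<and> \<alpha> \<noteq> (\<lambda>_. 0) \<and> opB ?vc ?wc \<alpha> = (\<lambda>I. (\<i> * complex_of_real c) * \<alpha> I)"
      by (rule eig_vecs[OF ij' ij(1,2) ij(3) cpos cub]) auto
    have e2: "\<exists>\<alpha>. is_form 4 \<alpha> \<and> \<alpha> \<noteq> (\<lambda>_. 0) \<and> opB ?vc ?wc \<alpha> = (\<lambda>I. (- \<i> * complex_of_real c) * \<alpha> I)"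
      by (rule eig_vecs[OF ij' ij(1,2) ij(3) cpos cub]) auto
    show ?thesis using k e1 e2 by auto
  next
    case False
    then have par: "\<And>i j. i < 8 \<Longrightarrow> j < 8 \<Longrightarrow> v i * w j = v j * w i" by auto
    have "(\<Sum>i<8. \<Sum>j<8. (v i * w j - v j * w i)^2) = 0"
      by (intro sum.neutral ballI) (simp add: par)
    then have "cc = 0" using lag by simp
    then have "c = 0" using cs by simp
    then show ?thesis using deg_vec[OF par] by auto
  qed
  show ?thesis using part1[of v w] sub sup unfolding c_def by blast
qed


end
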